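(* Let $n$ be even, $V=V_1\sqcup V_2$ with $|V_1|=|V_2|=n/2$, and $0\le q<p\le1$ with $p>0$. Consider the complete weighted graph on $V$ with $w(u,v)=p$ for distinct $u,v$ in the same block, $w(u,v)=q$ for $u,v$ in different blocks, and $w(v,v)=0$, and the cost $c(\{A,A^\complement\})=\sum_{u\in A,v\in A^\complement}w(u,v)$. If $\{A,A^\complement\}$ is a local minimum cut, then for each $i\in\{1,2\}$ either $V_i\subseteq A$ or $V_i\subseteq A^\complement$.
   Context: A cut $\{A,A^\complement\}$ of $V$ is a local minimum if moving any single vertex $v\in V$ to the other side (i.e., replacing the cut by $\{A\setminus\{v\},A^\complement\cup\{v\}\}$ if $v\in A$, or by $\{A\cup\{v\},A^\complement\setminus\{v\}\}$ if $v\in A^\complement$) does not decrease the cost. *)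

theory Defs
  imports Main "HOL.Real"
begin

definition block_weight :: "'a set \<Rightarrow> real \<Rightarrow> real \<Rightarrow> 'a \<Rightarrow> 'a \<Rightarrow> real" where
  "block_weight V1 p q u v =
     (if u = v then 0 else if (u \<in> V1) = (v \<in> V1) then p else q)"

definition cut_cost :: "('a \<Rightarrow> 'a \<Rightarrow> real) \<Rightarrow> 'a set \<Rightarrow> 'a set \<Rightarrow> real" where
  "cut_cost w V A = (\<Sum>u\<in>A. \<Sum>v\<in>V - A. w u v)"

definition local_min_cut :: "('a \<Rightarrow> 'a \<Rightarrow> real) \<Rightarrow> 'a set \<Rightarrow> 'a set \<Rightarrow> bool" where
  "local_min_cut w V A \<longleftrightarrow> A \<subseteq> V \<and>
     (\<forall>v\<in>V. cut_cost w V A \<le>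
        cut_cost w V (if v \<in> A then A - {v} else A \<union> {v}))"

end

theory Submission
  imports Defs
begin

lemma cost_remove:
  assumes "finite V" "A \<subseteq> V" "v \<in> A"
  shows "cut_cost w V (A - {v}) - cut_cost w V A
         = (\<Sum>u\<in>A-{v}. w u v) - (\<Sum>x\<in>V-A. w v x)"
proof -
  have fA: "finite A" using assms finite_subset by blast
  have e: "V - (A - {v}) = insert v (V - A)" using assms by auto
  have "cut_cost w V (A - {v}) = (\<Sum>u\<in>A-{v}. w u v + (\<Sum>x\<in>V-A. w u x))"
    unfolding cut_cost_def e using assms by (intro sum.cong) (auto simp: sum.insert)
  also have "\<dots> = (\<Sum>u\<in>A-{v}. w u v) + (\<Sum>u\<in>A-{v}. \<Sum>x\<in>V-A. w u x)"
    by (simp add: sum.distrib)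
  finally have 1: "cut_cost w V (A - {v}) = (\<Sum>u\<in>A-{v}. w u v) + (\<Sum>u\<in>A-{v}. \<Sum>x\<in>V-A. w u x)" .
  have 2: "cut_cost w V A = (\<Sum>x\<in>V-A. w v x) + (\<Sum>u\<in>A-{v}. \<Sum>x\<in>V-A. w u x)"
    unfolding cut_cost_def using fA assms(3) by (simp add: sum.remove)
  show ?thesis using 1 2 by simp
qed

lemma cost_add:
  assumes "finite V" "A \<subseteq> V" "u \<in> V" "u \<notin> A"
  shows "cut_cost w V (A \<union> {u}) - cut_cost w V A
         = (\<Sum>x\<in>V-A-{u}. w u x) - (\<Sum>y\<in>A. w y u)"
proof -
  have fA: "finite A" using assms finite_subset by blast
  have e: "V - (A \<union> {u}) = V - A - {u}" by auto
  have 1: "cut_cost w V (A \<union> {u}) = (\<Sum>x\<in>V-A-{u}. w u x) + (\<Sum>y\<in>A. \<Sum>x\<in>V-A-{u}. w y x)"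
    unfolding cut_cost_def e using fA assms by simp
  have "cut_cost w V A = (\<Sum>y\<in>A. w y u + (\<Sum>x\<in>V-A-{u}. w y x))"
    unfolding cut_cost_def using assms
    by (intro sum.cong) (auto simp: sum.remove[of "V-A" u])
  also have "\<dots> = (\<Sum>y\<in>A. w y u) + (\<Sum>y\<in>A. \<Sum>x\<in>V-A-{u}. w y x)"
    by (simp add: sum.distrib)
  finally show ?thesis using 1 by simp
qed

lemma block_part:
  fixes V A W V1 :: "'a set" and p q :: real
  assumes fin: "finite V" and p: "p > 0"
    and lm: "local_min_cut (block_weight V1 p q) V A"
    and W: "W = V1 \<or> W = V - V1"
    and WV: "W \<subseteq> V"
  shows "W \<subseteq> A \<or> W \<subseteq> V - A"
proof (rule ccontr)
  let ?w = "block_weight V1 p q"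
  assume "\<not> ?thesis"
  then obtain v u where v: "v \<in> W" "v \<in> A" and u: "u \<in> W" "u \<notin> A" using WV by blast
  have AV: "A \<subseteq> V" using lm unfolding local_min_cut_def by blast
  have uv: "u \<noteq> v" using u v by blast
  have vV: "v \<in> V" "u \<in> V" using v u WV by auto
  have same: "(u \<in> V1) = (v \<in> V1)" using W u v by auto
  have sym: "\<And>x y. ?w x y = ?w y x" unfolding block_weight_def by auto
  define f where "f x = ?w v x" for x
  have fu: "\<And>x. x \<noteq> u \<Longrightarrow> x \<noteq> v \<Longrightarrow> ?w u x = f x"
    unfolding f_def block_weight_def using same by auto
  have d1: "0 \<le> (\<Sum>x\<in>A-{v}. ?w x v) - (\<Sum>x\<in>V-A. ?w v x)"
    using lm vV v AV cost_remove[OF fin AV v(2), of ?w] unfolding local_min_cut_def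
    by (metis diff_ge_0_iff_ge)
  have d2: "0 \<le> (\<Sum>x\<in>V-A-{u}. ?w u x) - (\<Sum>y\<in>A. ?w y u)"
    using lm vV u AV cost_add[OF fin AV vV(2) u(2), of ?w] unfolding local_min_cut_def
    by (metis diff_ge_0_iff_ge)
  have fA: "finite A" using AV fin finite_subset by blast
  have s1: "(\<Sum>x\<in>A-{v}. ?w x v) = (\<Sum>x\<in>A-{v}. f x)"
    unfolding f_def using sym by simp
  have s2: "(\<Sum>x\<in>V-A. ?w v x) = ?w v u + (\<Sum>x\<in>V-A-{u}. f x)"
    unfolding f_def using fin u vV by (simp add: sum.remove[of "V-A" u])
  have s3: "(\<Sum>x\<in>V-A-{u}. ?w u x) = (\<Sum>x\<in>V-A-{u}. f x)"
    using fu v by (intro sum.cong) auto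
  have s4: "(\<Sum>y\<in>A. ?w y u) = ?w v u + (\<Sum>x\<in>A-{v}. f x)"
  proof -
    have "(\<Sum>y\<in>A. ?w y u) = ?w v u + (\<Sum>y\<in>A-{v}. ?w y u)"
      using fA v by (simp add: sum.remove)
    also have "(\<Sum>y\<in>A-{v}. ?w y u) = (\<Sum>x\<in>A-{v}. f x)"
      using fu u sym by (intro sum.cong refl) (metis DiffE singletonI)
    finally show ?thesis .
  qed
  have "?w v u = p" unfolding block_weight_def using uv same by auto
  then show False using d1 d2 s1 s2 s3 s4 p by linarith
qed

theorem lemma5:
  fixes V V1 V2 A :: "'a set" and n :: nat and p q :: real
  assumes "even n"
    and "finite V"
    and "V = V1 \<union> V2" and "V1 \<inter> V2 = {}"
    and "card V1 = n div 2" and "card V2 = n div 2"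
    and "0 \<le> q" and "q < p" and "p \<le> 1" and "p > 0"
    and "local_min_cut (block_weight V1 p q) V A"
  shows "\<forall>Vi \<in> {V1, V2}. Vi \<subseteq> A \<or> Vi \<subseteq> V - A"
proof -
  have "V2 = V - V1" using assms(3,4) by auto
  then show ?thesis
    using block_part[OF assms(2) assms(10) assms(11)] assms(3) by auto
qed

end
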